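(* For $\zeta\in[a,\tau)$ define $$\widetilde{M_1}(\zeta)=\frac{1}{\epsilon}\left[(1-\tau_1)+\left(\Lambda e^{\epsilon(\omega-\tau)}-\Lambda-(1-\tau_1)\right)e^{\epsilon(\tau-\zeta)}\right],$$ and let $\Lambda_{FP}=\frac{(1-\tau_1)\left(1-e^{-\epsilon(\tau-a)}\right)}{e^{\epsilon(\omega-\tau)}-1}$. If $\Lambda\le\Lambda_{FP}$, then there exists a critical age $\hat{\zeta}\in[a,\tau)$ such that $\widetilde{M_1}(\zeta)<0$ for $a\le\zeta<\hat{\zeta}$, $\widetilde{M_1}(\hat{\zeta})=0$, and $\widetilde{M_1}(\zeta)>0$ for $\hat{\zeta}<\zeta<\tau$ (so that participants younger than $\hat\zeta$ prefer individual savings to PAYGO, older ones prefer PAYGO, and age $\hat\zeta$ is indifferent). If $\Lambda>\Lambda_{FP}$, then $\widetilde{M_1}(\zeta)>0$ for all $\zeta\in[a,\tau)$ (all these participants prefer PAYGO to individual savings, their utility increasing in $\theta$).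
   Context: Parameters: $r>0$, $\mu>r$, $\sigma>0$, real $\gamma,\xi$; $\nu=(\mu-r)/\sigma$ and $\epsilon=\gamma-r-\xi\nu\neq0$. Ages $a<\tau<\omega$; salary tax rate $\tau_1\in[0,1)$. With survival function $s(x)=e^{-A_m(x-a)-\frac{B_m}{\ln c}(c^x-c^a)}$ (Makeham constants $A_m,B_m,c$) and population growth rate $\rho$, $\Lambda=\frac{\int_a^\tau e^{-(\rho+A_m)(u-a)-\frac{B_m}{\ln c}(c^u-c^a)}du}{\int_\tau^\omega e^{-(\rho+A_m)(u-a)-\frac{B_m}{\ln c}(c^u-c^a)}du}>0$ (inverse dependency ratio). Interpretation: $\zeta$ is a participant's age at the decision time; the participant's value function is $\frac1\delta L[x+(\widetilde{M_1}\theta+\widetilde{M_2}k+M_3)w+Ny]^\delta$ with $L>0$, so the sign of $\widetilde{M_1}(\zeta)$ is the sign of the effect of raising the PAYGO contribution rate $\theta$ (relative to individual savings). *)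

theory Defs
  imports "HOL-Analysis.Analysis"
begin

definition market_nu :: "real \<Rightarrow> real \<Rightarrow> real \<Rightarrow> real" where
  "market_nu r \<mu> \<sigma> = (\<mu> - r) / \<sigma>"

definition eps_param :: "real \<Rightarrow> real \<Rightarrow> real \<Rightarrow> real \<Rightarrow> real \<Rightarrow> real" where
  "eps_param r \<mu> \<sigma> \<gamma> \<xi> = \<gamma> - r - \<xi> * market_nu r \<mu> \<sigma>"

text \<open>Population density weight built from the Makeham survival function and growth rate rho.\<close>
definition makeham_weight :: "real \<Rightarrow> real \<Rightarrow> real \<Rightarrow> real \<Rightarrow> real \<Rightarrow> real \<Rightarrow> real" where
  "makeham_weight \<rho> Am Bm c a u =
     exp (- (\<rho> + Am) * (u - a) - Bm / ln c * (c powr u - c powr a))"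

definition inv_dep_ratio :: "real \<Rightarrow> real \<Rightarrow> real \<Rightarrow> real \<Rightarrow> real \<Rightarrow> real \<Rightarrow> real \<Rightarrow> real" where
  "inv_dep_ratio \<rho> Am Bm c a \<tau> \<omega> =
     integral {a..\<tau>} (makeham_weight \<rho> Am Bm c a) / integral {\<tau>..\<omega>} (makeham_weight \<rho> Am Bm c a)"

definition M1_tilde :: "real \<Rightarrow> real \<Rightarrow> real \<Rightarrow> real \<Rightarrow> real \<Rightarrow> real \<Rightarrow> real" where
  "M1_tilde \<epsilon> \<tau>1 \<Lambda> \<omega> \<tau> \<zeta> =
     (1 / \<epsilon>) * ((1 - \<tau>1) + (\<Lambda> * exp (\<epsilon> * (\<omega> - \<tau>)) - \<Lambda> - (1 - \<tau>1)) * exp (\<epsilon> * (\<tau> - \<zeta>)))"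

definition Lambda_FP :: "real \<Rightarrow> real \<Rightarrow> real \<Rightarrow> real \<Rightarrow> real \<Rightarrow> real" where
  "Lambda_FP \<epsilon> \<tau>1 a \<tau> \<omega> =
     (1 - \<tau>1) * (1 - exp (- \<epsilon> * (\<tau> - a))) / (exp (\<epsilon> * (\<omega> - \<tau>)) - 1)"

end

theory Submission
  imports Defs
begin

lemma core:
  fixes e t L a \<tau> \<omega> :: real
  assumes e: "e \<noteq> 0" and t: "t > 0" and L: "L > 0" and a: "a < \<tau>" and w: "\<tau> < \<omega>"
  defines "M \<equiv> \<lambda>\<zeta>. (1/e)*(t + (L*exp(e*(\<omega>-\<tau>)) - L - t)*exp(e*(\<tau>-\<zeta>)))"
    and "FP \<equiv> t*(1-exp(-e*(\<tau>-a)))/(exp(e*(\<omega>-\<tau>))-1)"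
  shows "(L \<le> FP \<longrightarrow> (\<exists>zh\<in>{a..<\<tau>}. (\<forall>\<zeta>. a \<le> \<zeta> \<and> \<zeta> < zh \<longrightarrow> M \<zeta> < 0) \<and> M zh = 0
            \<and> (\<forall>\<zeta>. zh < \<zeta> \<and> \<zeta> < \<tau> \<longrightarrow> M \<zeta> > 0)))
         \<and> (L > FP \<longrightarrow> (\<forall>\<zeta>\<in>{a..<\<tau>}. M \<zeta> > 0))"
proof -
  define E where "E = exp(e*(\<omega>-\<tau>))"
  define Xa where "Xa = exp(e*(\<tau>-a))"
  define K where "K = L*(E-1) - t"
  have Xa0: "Xa > 0" unfolding Xa_def by simp
  have Mf: "M \<zeta> = (t + K*exp(e*(\<tau>-\<zeta>)))/e" for \<zeta>
    unfolding M_def K_def E_def using e by (simp add: field_simps)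
  have em: "exp(-e*(\<tau>-a)) = 1/Xa" unfolding Xa_def by (simp add: exp_minus inverse_eq_divide)
  have FPf: "FP = t*(1-1/Xa)/(E-1)" unfolding FP_def em E_def ..
  have Ma: "M a = (t + K*Xa)/e" unfolding Mf Xa_def ..
  have Mt: "M \<tau> = L*(E-1)/e" unfolding Mf K_def by simp
  have signs: "(e > 0 \<and> E > 1 \<and> Xa > 1) \<or> (e < 0 \<and> E < 1 \<and> Xa < 1)"
  proof (cases "e > 0")
    case True
    then show ?thesis unfolding E_def Xa_def using a w by simp
  next
    case False
    then have "e < 0" using e by simp
    then show ?thesis unfolding E_def Xa_def using a w
      by (simp add: mult_neg_pos)
  qed
  have Mtpos: "M \<tau> > 0" unfolding Mt using signs L
    by (auto simp: zero_less_divide_iff mult_pos_neg)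
  have key: "L \<le> FP \<longleftrightarrow> M a \<le> 0"
  proof -
    have "L \<le> FP \<longleftrightarrow> (if e > 0 then L*(E-1)*Xa \<le> t*Xa - t else L*(E-1)*Xa \<ge> t*Xa - t)"
      using signs Xa0 unfolding FPf
      by (auto simp: field_simps)
    also have "\<dots> \<longleftrightarrow> M a \<le> 0"
      using signs Xa0 unfolding Ma K_def
      by (auto simp: field_simps divide_le_0_iff)
    finally show ?thesis .
  qed
  show ?thesis
  proof (intro conjI impI)
    assume "L \<le> FP"
    then have Ma0: "M a \<le> 0" using key by simp
    have Kneg: "K < 0"
    proof (cases "e > 0")
      case True
      then have "t + K*Xa \<le> 0" using Ma0 Ma by (simp add: divide_le_0_iff)
      then show ?thesis using t Xa0 by (smt (verit) mult_nonneg_nonneg)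
    next
      case False
      then have "E < 1" using signs by auto
      then show ?thesis unfolding K_def using L t by (smt (verit) mult_pos_neg)
    qed
    define zh where "zh = \<tau> - ln(-t/K)/e"
    have pos: "-t/K > 0" using Kneg t by (simp add: field_simps)
    have ez: "exp(e*(\<tau>-zh)) = -t/K" unfolding zh_def using e pos by simp
    have Mz: "M \<zeta> = (K/e)*(exp(e*(\<tau>-\<zeta>)) - exp(e*(\<tau>-zh)))" for \<zeta>
      unfolding Mf ez using Kneg e by (simp add: field_simps)
    have lt: "M \<zeta> < 0" if "\<zeta> < zh" for \<zeta>
    proof (cases "e > 0")
      case True
      then have h1: "exp(e*(\<tau>-\<zeta>)) > exp(e*(\<tau>-zh))" using that by simp
      have h2: "K/e < 0" using True Kneg by (simp add: divide_neg_pos)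
      show ?thesis unfolding Mz by (rule mult_neg_pos) (use h1 h2 in auto)
    next
      case False
      then have e0: "e < 0" using e by simp
      then have h1: "exp(e*(\<tau>-\<zeta>)) < exp(e*(\<tau>-zh))" using that by (simp add: mult_less_cancel_left)
      have h2: "K/e > 0" using e0 Kneg by (simp add: divide_neg_neg)
      show ?thesis unfolding Mz by (rule mult_pos_neg) (use h1 h2 in auto)
    qed
    have gt: "M \<zeta> > 0" if "\<zeta> > zh" for \<zeta>
    proof (cases "e > 0")
      case True
      then have h1: "exp(e*(\<tau>-\<zeta>)) < exp(e*(\<tau>-zh))" using that by simp
      have h2: "K/e < 0" using True Kneg by (simp add: divide_neg_pos)
      show ?thesis unfolding Mz by (rule mult_neg_neg) (use h1 h2 in auto)
    next
      case False
      then have e0: "e < 0" using e by simp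
      then have h1: "exp(e*(\<tau>-\<zeta>)) > exp(e*(\<tau>-zh))" using that by (simp add: mult_less_cancel_left)
      have h2: "K/e > 0" using e0 Kneg by (simp add: divide_neg_neg)
      show ?thesis unfolding Mz by (rule mult_pos_pos) (use h1 h2 in auto)
    qed
    have eqz: "M zh = 0" unfolding Mz by simp
    have "a \<le> zh" using gt[of a] Ma0 by force
    moreover have "zh < \<tau>" using lt[of \<tau>] Mtpos eqz by (cases "zh < \<tau>"; cases "zh = \<tau>") auto
    ultimately show "\<exists>zh\<in>{a..<\<tau>}. (\<forall>\<zeta>. a \<le> \<zeta> \<and> \<zeta> < zh \<longrightarrow> M \<zeta> < 0) \<and> M zh = 0
            \<and> (\<forall>\<zeta>. zh < \<zeta> \<and> \<zeta> < \<tau> \<longrightarrow> M \<zeta> > 0)"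
      using lt gt eqz by (intro bexI[of _ zh]) auto
  next
    assume "L > FP"
    then have Mapos: "M a > 0" using key by simp
    show "\<forall>\<zeta>\<in>{a..<\<tau>}. M \<zeta> > 0"
    proof
      fix \<zeta> assume z: "\<zeta> \<in> {a..<\<tau>}"
      define X where "X = exp(e*(\<tau>-\<zeta>))"
      have Mzf: "M \<zeta> = t/e + (K/e)*X" unfolding Mf X_def by (simp add: add_divide_distrib)
      have Maf: "M a = t/e + (K/e)*Xa" unfolding Ma by (simp add: add_divide_distrib)
      have Mtf: "M \<tau> = t/e + (K/e)*1" unfolding Mf by (simp add: add_divide_distrib)
      have bnd: "(1 \<le> X \<and> X \<le> Xa) \<or> (Xa \<le> X \<and> X \<le> 1)"
      proof (cases "e > 0")
        case True
        then have "e*(\<tau>-\<zeta>) \<le> e*(\<tau>-a)" "0 \<le> e*(\<tau>-\<zeta>)" using z by auto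
        then show ?thesis unfolding X_def Xa_def by simp
      next
        case False
        then have e0: "e < 0" using e by simp
        have "e*(\<tau>-\<zeta>) \<ge> e*(\<tau>-a)" using e0 z by (simp add: mult_le_cancel_left)
        moreover have "0 \<ge> e*(\<tau>-\<zeta>)" using e0 z by (simp add: mult_nonpos_nonneg)
        ultimately show ?thesis unfolding X_def Xa_def by simp
      qed
      define b where "b = K/e"
      define c where "c = t/e"
      have A: "c + b*Xa > 0" "c + b*1 > 0" using Mapos Mtpos unfolding Maf Mtf b_def c_def .
      show "M \<zeta> > 0" unfolding Mzf b_def[symmetric] c_def[symmetric]
      proof (cases "b \<ge> 0")
        case True
        then have "b * min 1 Xa \<le> b * X" using bnd by (intro mult_left_mono) auto
        moreover have "c + b * min 1 Xa > 0" using A by (cases "1 \<le> Xa") (auto simp: min_def)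
        ultimately show "c + b*X > 0" by linarith
      next
        case False
        then have "b * max 1 Xa \<le> b * X" using bnd by (intro mult_left_mono_neg) auto
        moreover have "c + b * max 1 Xa > 0" using A by (cases "1 \<le> Xa") (auto simp: max_def)
        ultimately show "c + b*X > 0" by linarith
      qed
    qed
  qed
qed

theorem theorem3p1:
  fixes r \<mu> \<sigma> \<gamma> \<xi> a \<tau> \<omega> \<tau>1 \<rho> Am Bm c :: real
  assumes "r > 0" and "\<mu> > r" and "\<sigma> > 0"
    and "eps_param r \<mu> \<sigma> \<gamma> \<xi> \<noteq> 0"
    and "a < \<tau>" and "\<tau> < \<omega>"
    and "0 \<le> \<tau>1" and "\<tau>1 < 1"
    and "c > 0" and "c \<noteq> 1"
    and "inv_dep_ratio \<rho> Am Bm c a \<tau> \<omega> > 0"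
  shows
    "(inv_dep_ratio \<rho> Am Bm c a \<tau> \<omega> \<le> Lambda_FP (eps_param r \<mu> \<sigma> \<gamma> \<xi>) \<tau>1 a \<tau> \<omega> \<longrightarrow>
       (\<exists>\<zeta>h \<in> {a..<\<tau>}.
          (\<forall>\<zeta>. a \<le> \<zeta> \<and> \<zeta> < \<zeta>h \<longrightarrow>
             M1_tilde (eps_param r \<mu> \<sigma> \<gamma> \<xi>) \<tau>1 (inv_dep_ratio \<rho> Am Bm c a \<tau> \<omega>) \<omega> \<tau> \<zeta> < 0) \<and>
          M1_tilde (eps_param r \<mu> \<sigma> \<gamma> \<xi>) \<tau>1 (inv_dep_ratio \<rho> Am Bm c a \<tau> \<omega>) \<omega> \<tau> \<zeta>h = 0 \<and>
          (\<forall>\<zeta>. \<zeta>h < \<zeta> \<and> \<zeta> < \<tau> \<longrightarrow>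
             M1_tilde (eps_param r \<mu> \<sigma> \<gamma> \<xi>) \<tau>1 (inv_dep_ratio \<rho> Am Bm c a \<tau> \<omega>) \<omega> \<tau> \<zeta> > 0)))
     \<and>
     (inv_dep_ratio \<rho> Am Bm c a \<tau> \<omega> > Lambda_FP (eps_param r \<mu> \<sigma> \<gamma> \<xi>) \<tau>1 a \<tau> \<omega> \<longrightarrow>
       (\<forall>\<zeta> \<in> {a..<\<tau>}.
          M1_tilde (eps_param r \<mu> \<sigma> \<gamma> \<xi>) \<tau>1 (inv_dep_ratio \<rho> Am Bm c a \<tau> \<omega>) \<omega> \<tau> \<zeta> > 0))"
proof -
  have t: "1 - \<tau>1 > 0" using assms by simp
  show ?thesis
    unfolding M1_tilde_def Lambda_FP_def
    using core[of "eps_param r \<mu> \<sigma> \<gamma> \<xi>" "1 - \<tau>1" "inv_dep_ratio \<rho> Am Bm c a \<tau> \<omega>" a \<tau> \<omega>] assms t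
    by blast
qed

end
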